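(* Let $-\infty \le \delta_L < \delta_U \le \infty$, let $\theta_{j,r} \in \mathbb{R}$, let $\mathcal{I}(\theta_{j,r}) \in (0,\infty)$ be the Fisher information at $\theta_{j,r}$, and fix a point $u_{j,r} \in (0,1)$. For $\delta \in [-\infty,\infty]$ put $$a(\delta,\theta_{j,r}) = \frac{\delta-\theta_{j,r}}{\sqrt{\mathcal{I}(\theta_{j,r})^{-1}}},$$ and for real $n>0$ define $$p^{(n)}_{\delta,j,r} = \Phi\!\left(a(\delta,\theta_{j,r})\sqrt{n} - \Phi^{-1}(u_{j,r})\right).$$ Here $\Phi$ is the standard normal CDF, and the conventions $p^{(n)}_{+\infty,j,r}=1$, $p^{(n)}_{-\infty,j,r}=0$ and $a(\pm\infty,\theta_{j,r})^2=+\infty$ are used. Then $$\lim_{n\to\infty}\frac{d}{dn}\,\mathrm{logit}\!\left[p^{(n)}_{\delta_U,j,r}-p^{(n)}_{\delta_L,j,r}\right] = \Big(0.5-\mathbb{I}\{\theta_{j,r}\notin(\delta_L,\delta_U)\}\Big)\times \min\{a(\delta_U,\theta_{j,r})^2,\ a(\delta_L,\theta_{j,r})^2\},$$ where $\mathrm{logit}(x)=\log(x)-\log(1-x)$, $n$ is treated as a continuous variable, and $\mathbb{I}\{\cdot\}$ is the indicator function.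
   Context: Setting: $n$ i.i.d. observations are generated from a parametric model $f(\boldsymbol{w};\boldsymbol{\eta})$ with true parameter $\boldsymbol{\eta}_{j,r}$ drawn from a data-generating distribution $\Psi_j$ for $j\in\{0,1\}$. The scalar estimand is $\theta = g(\boldsymbol{\eta})$, with true value $\theta_{j,r}=g(\boldsymbol{\eta}_{j,r})$. The hypothesis of interest is $H_1:\theta\in(\delta_L,\delta_U)$. The paper assumes that the model satisfies the standard regularity conditions for asymptotic normality of the maximum likelihood estimator, and that the prior satisfies the conditions of the Bernstein–von Mises theorem. The only consequence used in the statement is that the Fisher information $\mathcal{I}(\theta_{j,r})$ is a finite positive number. Interpretation of the quantity $p^{(n)}_{\delta,j,r}$: it is a large-sample proxy for the posterior probability $Pr(\theta<\delta \mid \text{data})$. It is obtained by taking the posterior to be $\mathcal{N}(\hat\theta^{(n)},\mathcal{I}(\theta_{j,r})^{-1}/n)$, where the maximum likelihood estimate is generated by CDF inversion as $\hat\theta^{(n)}=\theta_{j,r}+\Phi^{-1}(u_{j,r})\sqrt{\mathcal{I}(\theta_{j,r})^{-1}/n}$. Consequently, $p^{(n)}_{\delta_U,j,r}-p^{(n)}_{\delta_L,j,r}$ serves as a proxy for $Pr(H_1\mid\text{data})$. *)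

theory Defs
  imports "HOL-Probability.Probability"
begin

definition Phi :: "real \<Rightarrow> real" where
  "Phi x = cdf std_normal_distribution x"

definition Phi_inv :: "real \<Rightarrow> real" where
  "Phi_inv u = (THE z. Phi z = u)"

definition a_std :: "real \<Rightarrow> real \<Rightarrow> real \<Rightarrow> real" where
  "a_std I theta d = (d - theta) / sqrt (inverse I)"

definition a_sq :: "real \<Rightarrow> real \<Rightarrow> ereal \<Rightarrow> ereal" where
  "a_sq I theta delta = (case delta of ereal d \<Rightarrow> ereal ((a_std I theta d)\<^sup>2) | _ \<Rightarrow> \<infinity>)"

definition p_post :: "real \<Rightarrow> real \<Rightarrow> real \<Rightarrow> ereal \<Rightarrow> real \<Rightarrow> real" where
  "p_post I theta u delta n =
     (case delta of ereal d \<Rightarrow> Phi (a_std I theta d * sqrt n - Phi_inv u)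
                  | PInfty \<Rightarrow> 1
                  | MInfty \<Rightarrow> 0)"

definition logit :: "real \<Rightarrow> real" where
  "logit x = ln x - ln (1 - x)"

end

theory Submission
  imports Defs "HOL-Real_Asymp.Real_Asymp"
begin

lemma phi_cont: "continuous_on S std_normal_density"
  unfolding std_normal_density_def by (intro continuous_intros) simp

lemma Phi_diff:
  assumes "a < x"
  shows "Phi x - Phi a = integral {a..x} std_normal_density"
proof -
  let ?M = std_normal_distribution
  interpret real_distribution ?M by (rule real_dist_normal_dist)
  have "Phi x - Phi a = measure ?M {a<..x}"
    unfolding Phi_def using cdf_diff_eq[OF assms] .
  have int: "(std_normal_density has_integral integral {a..x} std_normal_density) {a..x}"
    using integrable_continuous_real[OF phi_cont] by blast
  have int2: "(std_normal_density has_integral integral {a..x} std_normal_density) {a<..x}"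
    using int by (subst has_integral_spike_set_eq[where T="{a..x}"])
       (auto intro: negligible_subset[OF negligible_sing[of a]])
  have "emeasure ?M {a<..x} = (\<integral>\<^sup>+ y. ennreal (std_normal_density y) * indicator {a<..x} y \<partial>lborel)"
    by (subst emeasure_density) auto
  also have "\<dots> = ennreal (integral {a..x} std_normal_density)"
    by (rule nn_integral_has_integral_lebesgue'[OF _ int2]) simp
  finally have "emeasure ?M {a<..x} = ennreal (integral {a..x} std_normal_density)" .
  moreover have "integral {a..x} std_normal_density \<ge> 0"
    by (rule integral_nonneg[OF integrable_continuous_real[OF phi_cont]]) simp
  ultimately have "measure ?M {a<..x} = integral {a..x} std_normal_density"
    by (simp add: measure_def)
  with \<open>Phi x - Phi a = _\<close> show ?thesis by simp
qed

lemma Phi_deriv: "(Phi has_real_derivative std_normal_density t) (at t)"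
proof -
  let ?a = "t - 1" and ?b = "t + 1"
  have "((\<lambda>x. integral {?a..x} std_normal_density) has_real_derivative std_normal_density t) (at t within {?a..?b})"
    by (rule integral_has_real_derivative[OF phi_cont]) auto
  then have "((\<lambda>x. integral {?a..x} std_normal_density) has_real_derivative std_normal_density t) (at t)"
    by (subst (asm) at_within_interior) auto
  then have "((\<lambda>x. Phi ?a + integral {?a..x} std_normal_density) has_real_derivative std_normal_density t) (at t)"
    by (auto intro!: derivative_eq_intros)
  then show ?thesis
    by (rule has_field_derivative_transform_within_open[where S="{?a<..<?b}"])
       (auto, metis Phi_diff add.commute diff_add_cancel diff_less_eq)
qed

lemma Phi_top: "(Phi \<longlongrightarrow> 1) at_top"
proof -
  interpret real_distribution std_normal_distribution by (rule real_dist_normal_dist)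
  show ?thesis unfolding Phi_def[abs_def] by (rule cdf_lim_at_top_prob)
qed

lemma Phi_bot: "(Phi \<longlongrightarrow> 0) at_bot"
proof -
  interpret real_distribution std_normal_distribution by (rule real_dist_normal_dist)
  show ?thesis unfolding Phi_def[abs_def] by (rule cdf_lim_at_bot)
qed

lemma lhopital_0_at_top:
  fixes f g :: "real \<Rightarrow> real"
  assumes f0: "(f \<longlongrightarrow> 0) at_top" and g0: "(g \<longlongrightarrow> 0) at_top"
    and gnz: "eventually (\<lambda>x. g x \<noteq> 0) at_top"
    and g': "eventually (\<lambda>x. g' x \<noteq> 0) at_top"
    and Df: "eventually (\<lambda>x. DERIV f x :> f' x) at_top"
    and Dg: "eventually (\<lambda>x. DERIV g x :> g' x) at_top"
    and lim: "((\<lambda> x. (f' x / g' x)) \<longlongrightarrow> y) at_top"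
  shows "((\<lambda> x. f x / g x) \<longlongrightarrow> y) at_top"
  unfolding filterlim_at_top_to_right
proof (rule lhopital_right_0)
  let ?F = "\<lambda>x. f (inverse x)"
  let ?G = "\<lambda>x. g (inverse x)"
  let ?R = "at_right (0::real)"
  let ?D = "\<lambda>f' x. f' (inverse x) * - (inverse x ^ Suc (Suc 0))"
  show "(?F \<longlongrightarrow> 0) ?R" using f0 unfolding filterlim_at_top_to_right .
  show "(?G \<longlongrightarrow> 0) ?R" using g0 unfolding filterlim_at_top_to_right .
  show "eventually (\<lambda>x. ?G x \<noteq> 0) ?R" using gnz by (simp add: eventually_at_right_to_top)
  show "eventually (\<lambda>x. DERIV ?G x  :> ?D g' x) ?R"
    unfolding eventually_at_right_to_top
    using Dg eventually_ge_at_top[where c=1]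
    by eventually_elim (rule derivative_eq_intros DERIV_chain'[where f=inverse] | simp)+
  show "eventually (\<lambda>x. DERIV ?F x  :> ?D f' x) ?R"
    unfolding eventually_at_right_to_top
    using Df eventually_ge_at_top[where c=1]
    by eventually_elim (rule derivative_eq_intros DERIV_chain'[where f=inverse] | simp)+
  show "eventually (\<lambda>x. ?D g' x \<noteq> 0) ?R"
    unfolding eventually_at_right_to_top
    using g' eventually_ge_at_top[where c=1]
    by eventually_elim auto
  show "((\<lambda>x. ?D f' x / ?D g' x) \<longlongrightarrow> y) ?R"
    unfolding filterlim_at_right_to_top
    apply (intro filterlim_cong[THEN iffD2, OF refl refl _ lim])
    using eventually_ge_at_top[where c=1]
    by eventually_elim simp
qed

lemma aux_ratio:
  fixes e s x :: real
  assumes "e > 0" "s > 0" "x > 0"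
  shows "- (e / s) / ((- x * e * x - e) / x\<^sup>2) = x\<^sup>2 / (x\<^sup>2 + 1) / s"
proof -
  have "- x * e * x - e = - (e * (x\<^sup>2 + 1))" by (simp add: algebra_simps power2_eq_square)
  moreover have "x\<^sup>2 + 1 > 0" by (simp add: add_nonneg_pos)
  ultimately show ?thesis using assms
    by (simp add: divide_simps)
qed

lemma phi_eq: "std_normal_density x = exp (- x\<^sup>2 / 2) / sqrt (2 * pi)"
  by (simp add: std_normal_density_def)

lemma phi_pos: "std_normal_density x > 0"
  by (simp add: normal_density_pos)

lemma Phi_deriv': "DERIV Phi x :> exp (- x\<^sup>2 / 2) / sqrt (2 * pi)"
  using Phi_deriv by (simp add: phi_eq)

lemma Phi_minus_deriv: "DERIV (\<lambda>x. Phi (- x)) x :> - (exp (- x\<^sup>2 / 2) / sqrt (2 * pi))"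
proof -
  have "DERIV (\<lambda>x. Phi (- x)) x :> exp (- (- x)\<^sup>2 / 2) / sqrt (2 * pi) * (- 1)"
    by (rule DERIV_chain2[OF Phi_deriv']) (auto intro!: derivative_eq_intros)
  then show ?thesis by simp
qed

lemma Phi_mono_strict: "x < y \<Longrightarrow> Phi x < Phi y"
  by (rule DERIV_pos_imp_increasing[of x y Phi]) (auto intro!: exI Phi_deriv phi_pos)

lemma Phi_nonneg: "Phi x \<ge> 0"
proof -
  interpret real_distribution std_normal_distribution by (rule real_dist_normal_dist)
  show ?thesis unfolding Phi_def by (rule cdf_nonneg)
qed

lemma Phi_le1: "Phi x \<le> 1"
proof -
  interpret real_distribution std_normal_distribution by (rule real_dist_normal_dist)
  show ?thesis unfolding Phi_def by (rule cdf_bounded_prob)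
qed

lemma Phi_pos: "Phi x > 0"
  using Phi_mono_strict[of "x - 1" x] Phi_nonneg[of "x - 1"] by simp

lemma Phi_less1: "Phi x < 1"
  using Phi_mono_strict[of x "x + 1"] Phi_le1[of "x + 1"] by simp

lemma Phi_sym: "Phi (- x) = 1 - Phi x"
proof -
  have "\<forall>x. DERIV (\<lambda>x. Phi (- x) + Phi x) x :> 0"
  proof
    fix x
    show "DERIV (\<lambda>x. Phi (- x) + Phi x) x :> 0"
      by (rule derivative_eq_intros DERIV_chain'[where f="\<lambda>x. - x"] Phi_deriv' | simp)+
  qed
  then obtain k where k: "\<And>x. Phi (- x) + Phi x = k"
    using DERIV_isconst_all by metis
  have "((\<lambda>x. Phi (- x) + Phi x) \<longlongrightarrow> 0 + 1) at_top"
    by (intro tendsto_add Phi_top filterlim_compose[OF Phi_bot] filterlim_uminus_at_bot_at_top)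
  then have "((\<lambda>x::real. k) \<longlongrightarrow> 1) at_top" by (simp add: k)
  then have "k = 1" using tendsto_unique[OF trivial_limit_at_top_linorder tendsto_const] by metis
  then show ?thesis using k[of x] by simp
qed

lemma mills: "((\<lambda>x. Phi (- x) * x / exp (- x\<^sup>2 / 2)) \<longlongrightarrow> 1 / sqrt (2 * pi)) at_top"
proof -
  have "((\<lambda>x. Phi (- x) / (exp (- x\<^sup>2 / 2) / x)) \<longlongrightarrow> 1 / sqrt (2 * pi)) at_top"
  proof (rule lhopital_0_at_top[where f' = "\<lambda>x::real. - (exp (- x\<^sup>2 / 2) / sqrt (2 * pi))"
        and g' = "\<lambda>x::real. (- x * exp (- x\<^sup>2 / 2) * x - exp (- x\<^sup>2 / 2)) / x\<^sup>2"])
    show "((\<lambda>x. Phi (- x)) \<longlongrightarrow> 0) at_top"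
      by (rule filterlim_compose[OF Phi_bot filterlim_uminus_at_bot_at_top])
    show "((\<lambda>x::real. exp (- x\<^sup>2 / 2) / x) \<longlongrightarrow> 0) at_top" by real_asymp
    show "\<forall>\<^sub>F (x::real) in at_top. exp (- x\<^sup>2 / 2) / x \<noteq> 0"
      using eventually_gt_at_top[of 0] by eventually_elim simp
    show "\<forall>\<^sub>F (x::real) in at_top. (- x * exp (- x\<^sup>2 / 2) * x - exp (- x\<^sup>2 / 2)) / x\<^sup>2 \<noteq> 0"
    proof (rule eventually_mono[OF eventually_gt_at_top[of 0]])
      fix x :: real assume "0 < x"
      have "- x * exp (- x\<^sup>2 / 2) * x - exp (- x\<^sup>2 / 2) = - ((x * x + 1) * exp (- x\<^sup>2 / 2))"
        by (simp add: algebra_simps)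
      also have "\<dots> < 0" proof -
        have "(x * x + 1) * exp (- x\<^sup>2 / 2) > 0" by (intro mult_pos_pos) (auto simp: add_pos_nonneg intro: add_nonneg_pos)
        then show ?thesis by simp
      qed
      finally show "(- x * exp (- x\<^sup>2 / 2) * x - exp (- x\<^sup>2 / 2)) / x\<^sup>2 \<noteq> 0"
        using \<open>0 < x\<close> by simp
    qed
    show "\<forall>\<^sub>F x in at_top. ((\<lambda>x. Phi (- x)) has_real_derivative - (exp (- x\<^sup>2 / 2) / sqrt (2 * pi))) (at x)"
      by (intro always_eventually allI) (rule Phi_minus_deriv)
    show "\<forall>\<^sub>F (x::real) in at_top. ((\<lambda>x. exp (- x\<^sup>2 / 2) / x) has_real_derivative (- x * exp (- x\<^sup>2 / 2) * x - exp (- x\<^sup>2 / 2)) / x\<^sup>2) (at x)"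
      using eventually_gt_at_top[of 0] by eventually_elim (auto intro!: derivative_eq_intros simp: power2_eq_square)
    show "((\<lambda>x::real. - (exp (- x\<^sup>2 / 2) / sqrt (2 * pi)) / ((- x * exp (- x\<^sup>2 / 2) * x - exp (- x\<^sup>2 / 2)) / x\<^sup>2)) \<longlongrightarrow> 1 / sqrt (2 * pi)) at_top"
    proof -
      have "((\<lambda>x::real. x\<^sup>2 / (x\<^sup>2 + 1)) \<longlongrightarrow> 1) at_top" by real_asymp
      then have "((\<lambda>x::real. x\<^sup>2 / (x\<^sup>2 + 1) / sqrt (2 * pi)) \<longlongrightarrow> 1 / sqrt (2 * pi)) at_top"
        by (intro tendsto_divide tendsto_const) auto
      then show ?thesis
        apply (rule filterlim_cong[THEN iffD1, OF refl refl, rotated])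
        using eventually_gt_at_top[of 0] by eventually_elim (subst aux_ratio, auto)
    qed
  qed
  then show ?thesis
    apply (rule filterlim_cong[THEN iffD1, OF refl refl, rotated])
    using eventually_gt_at_top[of 0] by eventually_elim (simp add: field_simps)
qed

lemma ev_pos: "filterlim f at_top F \<Longrightarrow> eventually (\<lambda>x. f x > (0::real)) F"
  by (simp add: filterlim_at_top_dense)

definition HH :: "real \<Rightarrow> real" where
  "HH x = Phi (- x) * x / exp (- x\<^sup>2 / 2)"

lemma HH_lim: "filterlim g at_top F \<Longrightarrow> ((\<lambda>n. HH (g n)) \<longlongrightarrow> 1 / sqrt (2 * pi)) F"
  unfolding HH_def by (rule filterlim_compose[OF mills])

lemma HH_pos: "x > 0 \<Longrightarrow> HH x > 0"
  unfolding HH_def using Phi_pos[of "-x"] by simp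

lemma Phi_neg_HH: "x > 0 \<Longrightarrow> Phi (- x) = HH x * exp (- x\<^sup>2 / 2) / x"
  unfolding HH_def by simp

definition Fe :: "real \<Rightarrow> ereal \<Rightarrow> real \<Rightarrow> real" where
  "Fe c a n = (case a of ereal r \<Rightarrow> Phi (r * sqrt n - c) | PInfty \<Rightarrow> 1 | MInfty \<Rightarrow> 0)"

definition Fd :: "real \<Rightarrow> ereal \<Rightarrow> real \<Rightarrow> real" where
  "Fd c a n = (case a of ereal r \<Rightarrow> exp (- (r * sqrt n - c)\<^sup>2 / 2) / sqrt (2 * pi) * (r * (inverse (sqrt n) / 2)) | _ \<Rightarrow> 0)"

definition EE :: "real \<Rightarrow> ereal \<Rightarrow> ereal \<Rightarrow> real \<Rightarrow> real" where
  "EE c aL aU n = (Fd c aU n - Fd c aL n) / ((Fe c aU n - Fe c aL n) * (1 - (Fe c aU n - Fe c aL n)))"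

lemma Fd_real: "Fd c (ereal r) n = exp (- (r * sqrt n - c)\<^sup>2 / 2) / sqrt (2 * pi) * (r * (inverse (sqrt n) / 2))"
  by (simp add: Fd_def)

lemma ratio_in:
  assumes "r > 0"
  shows "((\<lambda>n. Fd c (ereal r) n / Phi (- (r * sqrt n - c))) \<longlongrightarrow> r\<^sup>2 / 2) at_top"
proof -
  define K where "K = 1 / sqrt (2 * pi)"
  have K: "K > 0" by (simp add: K_def)
  have x: "filterlim (\<lambda>n::real. r * sqrt n - c) at_top at_top" using assms by real_asymp
  have q: "((\<lambda>n::real. (r * sqrt n - c) / (2 * sqrt n)) \<longlongrightarrow> r / 2) at_top" using assms by real_asymp
  have "((\<lambda>n. K * r * ((r * sqrt n - c) / (2 * sqrt n)) / HH (r * sqrt n - c)) \<longlongrightarrow> K * r * (r / 2) / K) at_top"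
    by (intro tendsto_intros q) (use HH_lim[OF x] K in \<open>auto simp: K_def\<close>)
  also have "K * r * (r / 2) / K = r\<^sup>2 / 2" using K by (simp add: power2_eq_square)
  finally have L: "((\<lambda>n. K * r * ((r * sqrt n - c) / (2 * sqrt n)) / HH (r * sqrt n - c)) \<longlongrightarrow> r\<^sup>2 / 2) at_top" .
  show ?thesis
  proof (rule filterlim_cong[THEN iffD1, OF refl refl _ L])
    show "\<forall>\<^sub>F n in at_top. K * r * ((r * sqrt n - c) / (2 * sqrt n)) / HH (r * sqrt n - c) = Fd c (ereal r) n / Phi (- (r * sqrt n - c))"
      using eventually_gt_at_top[of 0] ev_pos[OF x]
    proof eventually_elim
      case (elim n)
      define x where "x = r * sqrt n - c"
      have h: "HH x > 0" using HH_pos elim by (simp add: x_def)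
      have "Phi (- x) = HH x * exp (- x\<^sup>2 / 2) / x" using Phi_neg_HH[of x] elim by (simp add: x_def)
      have "K * r * (x / (2 * sqrt n)) / HH x = exp (- x\<^sup>2 / 2) / sqrt (2 * pi) * (r * (inverse (sqrt n) / 2)) / (HH x * exp (- x\<^sup>2 / 2) / x)"
        using elim h by (simp add: K_def field_simps x_def)
      then show ?case using \<open>Phi (- x) = _\<close> unfolding Fd_real x_def by simp
    qed
  qed
qed

lemma ratio_out:
  assumes "r < 0"
  shows "((\<lambda>n. Fd c (ereal r) n / Phi (r * sqrt n - c)) \<longlongrightarrow> - (r\<^sup>2 / 2)) at_top"
proof -
  define K where "K = 1 / sqrt (2 * pi)"
  have K: "K > 0" by (simp add: K_def)
  have x: "filterlim (\<lambda>n::real. - (r * sqrt n - c)) at_top at_top" using assms by real_asymp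
  have q: "((\<lambda>n::real. (- (r * sqrt n - c)) / (2 * sqrt n)) \<longlongrightarrow> - r / 2) at_top" using assms by real_asymp
  have "((\<lambda>n. K * r * ((- (r * sqrt n - c)) / (2 * sqrt n)) / HH (- (r * sqrt n - c))) \<longlongrightarrow> K * r * (- r / 2) / K) at_top"
    by (intro tendsto_intros q) (use HH_lim[OF x] K in \<open>auto simp: K_def\<close>)
  also have "K * r * (- r / 2) / K = - (r\<^sup>2 / 2)" using K by (simp add: power2_eq_square)
  finally have L: "((\<lambda>n. K * r * ((- (r * sqrt n - c)) / (2 * sqrt n)) / HH (- (r * sqrt n - c))) \<longlongrightarrow> - (r\<^sup>2 / 2)) at_top" .
  show ?thesis
  proof (rule filterlim_cong[THEN iffD1, OF refl refl _ L])
    show "\<forall>\<^sub>F n in at_top. K * r * ((- (r * sqrt n - c)) / (2 * sqrt n)) / HH (- (r * sqrt n - c)) = Fd c (ereal r) n / Phi (r * sqrt n - c)"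
      using eventually_gt_at_top[of 0] ev_pos[OF x]
    proof eventually_elim
      case (elim n)
      define x where "x = - (r * sqrt n - c)"
      have h: "HH x > 0" using HH_pos elim by (simp add: x_def)
      have "Phi (- x) = HH x * exp (- x\<^sup>2 / 2) / x" using Phi_neg_HH[of x] elim by (simp add: x_def)
      have "K * r * (x / (2 * sqrt n)) / HH x = exp (- x\<^sup>2 / 2) / sqrt (2 * pi) * (r * (inverse (sqrt n) / 2)) / (HH x * exp (- x\<^sup>2 / 2) / x)"
        using elim h by (simp add: K_def field_simps x_def)
      moreover have "exp (- x\<^sup>2 / 2) = exp (- (r * sqrt n - c)\<^sup>2 / 2)" by (simp add: x_def power2_eq_square algebra_simps)
      ultimately show ?case using \<open>Phi (- x) = _\<close> unfolding Fd_real x_def by simp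
    qed
  qed
qed

lemma G_lim:
  fixes l r c :: real
  assumes "r\<^sup>2 < l\<^sup>2"
  shows "((\<lambda>n. exp (- (l * sqrt n - c)\<^sup>2 / 2) / exp (- (r * sqrt n - c)\<^sup>2 / 2)) \<longlongrightarrow> 0) at_top"
proof -
  define d where "d = (l\<^sup>2 - r\<^sup>2) / 2"
  define b where "b = c * (l - r)"
  have d: "d > 0" using assms by (simp add: d_def)
  have L: "((\<lambda>n::real. exp (- d * n + b * sqrt n)) \<longlongrightarrow> 0) at_top" using d by real_asymp
  show ?thesis
  proof (rule filterlim_cong[THEN iffD1, OF refl refl _ L])
    show "\<forall>\<^sub>F n in at_top. exp (- d * n + b * sqrt n) = exp (- (l * sqrt n - c)\<^sup>2 / 2) / exp (- (r * sqrt n - c)\<^sup>2 / 2)"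
      using eventually_gt_at_top[of 0]
    proof eventually_elim
      case (elim n)
      have s: "sqrt n * sqrt n = n" using elim by simp
      have e1: "(l * sqrt n - c)\<^sup>2 = l\<^sup>2 * n - 2 * l * c * sqrt n + c\<^sup>2"
        using s by (simp add: power2_eq_square algebra_simps)
      have e2: "(r * sqrt n - c)\<^sup>2 = r\<^sup>2 * n - 2 * r * c * sqrt n + c\<^sup>2"
        using s by (simp add: power2_eq_square algebra_simps)
      have "- d * n + b * sqrt n = - (l * sqrt n - c)\<^sup>2 / 2 - (- (r * sqrt n - c)\<^sup>2 / 2)"
        unfolding e1 e2 d_def b_def by (simp add: field_simps)
      then show ?case by (metis exp_diff)
    qed
  qed
qed

lemma gen_lim:
  fixes A B p q :: "real \<Rightarrow> real"
  assumes "eventually (\<lambda>n. A n \<noteq> 0) F" "(p \<longlongrightarrow> L) F" "L \<noteq> 0" "(q \<longlongrightarrow> M) F" "M \<noteq> 0"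
    "((\<lambda>n. B n / A n) \<longlongrightarrow> 0) F"
  shows "((\<lambda>n. (A n + B n) / (A n / p n + \<sigma> * (B n / q n))) \<longlongrightarrow> L) F"
proof -
  have "((\<lambda>n. (1 + B n / A n) / (1 / p n + \<sigma> * ((B n / A n) / q n))) \<longlongrightarrow> (1 + 0) / (1 / L + \<sigma> * (0 / M))) F"
    by (intro tendsto_intros assms) (use assms in auto)
  then have L: "((\<lambda>n. (1 + B n / A n) / (1 / p n + \<sigma> * ((B n / A n) / q n))) \<longlongrightarrow> L) F" by simp
  show ?thesis
  proof (rule filterlim_cong[THEN iffD1, OF refl refl _ L])
    show "\<forall>\<^sub>F n in F. (1 + B n / A n) / (1 / p n + \<sigma> * ((B n / A n) / q n)) = (A n + B n) / (A n / p n + \<sigma> * (B n / q n))"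
      using assms(1)
    proof eventually_elim
      case (elim n)
      have "(1 + B n / A n) = (A n + B n) / A n" using elim by (simp add: field_simps)
      moreover have "1 / p n + \<sigma> * ((B n / A n) / q n) = (A n / p n + \<sigma> * (B n / q n)) / A n"
        using elim by (simp add: field_simps)
      ultimately show ?case using elim by simp
    qed
  qed
qed

lemma mediant:
  fixes A B p q :: real
  assumes "A > 0" "B > 0" "p > 0" "q > 0"
  shows "min p q \<le> (A + B) / (A / p + B / q)" "(A + B) / (A / p + B / q) \<le> max p q"
proof -
  have D: "A / p + B / q > 0" using assms by (intro add_pos_pos divide_pos_pos)
  have "A / p + B / q \<le> A / min p q + B / min p q"
    using assms by (intro add_mono divide_left_mono) auto
  then have "(A + B) / (A / p + B / q) \<ge> (A + B) / ((A + B) / min p q)"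
    using assms D by (intro divide_left_mono) (auto simp: add_divide_distrib)
  then show "min p q \<le> (A + B) / (A / p + B / q)" using assms by simp
  have D2: "A / max p q + B / max p q > 0" using assms by (intro add_pos_pos divide_pos_pos) (auto simp: less_max_iff_disj)
  have "A / p + B / q \<ge> A / max p q + B / max p q"
    using assms by (intro add_mono divide_left_mono) auto
  then have "(A + B) / (A / p + B / q) \<le> (A + B) / ((A + B) / max p q)"
    using assms D D2 by (intro divide_left_mono) (auto simp: add_divide_distrib)
  then show "(A + B) / (A / p + B / q) \<le> max p q" using assms by simp
qed

lemma Fe_simps[simp]: "Fe c (ereal r) n = Phi (r * sqrt n - c)" "Fe c \<infinity> n = 1" "Fe c (-\<infinity>) n = 0"
  by (simp_all add: Fe_def)

lemma Fd_simps[simp]: "Fd c \<infinity> n = 0" "Fd c (-\<infinity>) n = 0"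
  by (simp_all add: Fd_def)

lemma Phi_lim_pos: "r > 0 \<Longrightarrow> ((\<lambda>n. Phi (r * sqrt n - c)) \<longlongrightarrow> 1) at_top"
  by (rule filterlim_compose[OF Phi_top]) real_asymp

lemma Phi_lim_neg: "r < 0 \<Longrightarrow> ((\<lambda>n. Phi (r * sqrt n - c)) \<longlongrightarrow> 0) at_top"
  by (rule filterlim_compose[OF Phi_bot]) real_asymp

lemma Fd_pos: "r > 0 \<Longrightarrow> n > 0 \<Longrightarrow> Fd c (ereal r) n > 0"
  unfolding Fd_real by (intro mult_pos_pos divide_pos_pos) auto

lemma Fd_neg: "r < 0 \<Longrightarrow> n > 0 \<Longrightarrow> Fd c (ereal r) n < 0"
  unfolding Fd_real by (intro mult_pos_neg divide_pos_pos mult_neg_pos) auto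

lemma BA_lim:
  assumes "r\<^sup>2 < l\<^sup>2" "r \<noteq> 0"
  shows "((\<lambda>n. - Fd c (ereal l) n / Fd c (ereal r) n) \<longlongrightarrow> 0) at_top"
proof -
  have "((\<lambda>n. - (exp (- (l * sqrt n - c)\<^sup>2 / 2) / exp (- (r * sqrt n - c)\<^sup>2 / 2)) * (l / r)) \<longlongrightarrow> - 0 * (l / r)) at_top"
    by (intro tendsto_intros G_lim assms)
  then have L: "((\<lambda>n. - (exp (- (l * sqrt n - c)\<^sup>2 / 2) / exp (- (r * sqrt n - c)\<^sup>2 / 2)) * (l / r)) \<longlongrightarrow> 0) at_top"
    by simp
  show ?thesis
  proof (rule filterlim_cong[THEN iffD1, OF refl refl _ L])
    show "\<forall>\<^sub>F n in at_top. - (exp (- (l * sqrt n - c)\<^sup>2 / 2) / exp (- (r * sqrt n - c)\<^sup>2 / 2)) * (l / r) = - Fd c (ereal l) n / Fd c (ereal r) n"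
      using eventually_gt_at_top[of 0]
      by eventually_elim (use assms in \<open>simp add: Fd_real field_simps\<close>)
  qed
qed

lemma C1fin:
  assumes "l < 0" "0 < r" "r\<^sup>2 \<le> l\<^sup>2"
  shows "(EE c (ereal l) (ereal r) \<longlongrightarrow> r\<^sup>2 / 2) at_top"
proof -
  define A where "A n = Fd c (ereal r) n" for n
  define B where "B n = - Fd c (ereal l) n" for n
  define p where "p n = A n / Phi (- (r * sqrt n - c))" for n
  define q where "q n = B n / Phi (l * sqrt n - c)" for n
  define P where "P n = Phi (r * sqrt n - c) - Phi (l * sqrt n - c)" for n
  have pl: "(p \<longlongrightarrow> r\<^sup>2 / 2) at_top" unfolding p_def A_def using ratio_in[OF assms(2)] .
  have ql: "(q \<longlongrightarrow> l\<^sup>2 / 2) at_top" unfolding q_def B_def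
    using tendsto_minus[OF ratio_out[OF assms(1), of c]] by simp
  have Pl: "((\<lambda>n. 1 / P n) \<longlongrightarrow> 1 / (1 - 0)) at_top" unfolding P_def
    by (intro tendsto_intros Phi_lim_pos Phi_lim_neg assms) simp
  have ev: "\<forall>\<^sub>F n in at_top. EE c (ereal l) (ereal r) n = (A n + B n) / (A n / p n + 1 * (B n / q n)) * (1 / P n)
      \<and> A n > 0 \<and> B n > 0 \<and> p n > 0 \<and> q n > 0"
    using eventually_gt_at_top[of 0]
  proof eventually_elim
    case (elim n)
    have A: "A n > 0" unfolding A_def using Fd_pos assms elim by blast
    have B: "B n > 0" unfolding B_def using Fd_neg assms elim by simp
    have ph1: "Phi (- (r * sqrt n - c)) > 0" "Phi (l * sqrt n - c) > 0" by (rule Phi_pos)+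
    have Ap: "A n / p n = Phi (- (r * sqrt n - c))" unfolding p_def using A ph1 by simp
    have Bq: "B n / q n = Phi (l * sqrt n - c)" unfolding q_def using B ph1 by simp
    have "1 - P n = Phi (- (r * sqrt n - c)) + Phi (l * sqrt n - c)" unfolding P_def Phi_sym by simp
    then have "EE c (ereal l) (ereal r) n = (A n + B n) / (A n / p n + 1 * (B n / q n)) * (1 / P n)"
      unfolding EE_def Ap Bq by (simp add: A_def B_def P_def)
    then show ?case using A B ph1 by (simp add: p_def q_def)
  qed
  have M: "((\<lambda>n. (A n + B n) / (A n / p n + 1 * (B n / q n))) \<longlongrightarrow> r\<^sup>2 / 2) at_top"
  proof (cases "r\<^sup>2 < l\<^sup>2")
    case True
    show ?thesis
    proof (rule gen_lim[OF _ pl _ ql])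
      show "\<forall>\<^sub>F n in at_top. A n \<noteq> 0" using ev by eventually_elim simp
      show "r\<^sup>2 / 2 \<noteq> 0" "l\<^sup>2 / 2 \<noteq> 0" using assms by auto
      show "((\<lambda>n. B n / A n) \<longlongrightarrow> 0) at_top" unfolding A_def B_def using BA_lim[OF True] assms by simp
    qed
  next
    case False
    then have eq: "l\<^sup>2 = r\<^sup>2" using assms by simp
    show ?thesis
    proof (rule tendsto_sandwich[where f = "\<lambda>n. min (p n) (q n)" and h = "\<lambda>n. max (p n) (q n)"])
      show "\<forall>\<^sub>F n in at_top. min (p n) (q n) \<le> (A n + B n) / (A n / p n + 1 * (B n / q n))"
        using ev by eventually_elim (use mediant in auto)
      show "\<forall>\<^sub>F n in at_top. (A n + B n) / (A n / p n + 1 * (B n / q n)) \<le> max (p n) (q n)"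
        using ev by eventually_elim (use mediant in auto)
      show "((\<lambda>n. min (p n) (q n)) \<longlongrightarrow> r\<^sup>2 / 2) at_top"
        using tendsto_min[OF pl ql] eq by simp
      show "((\<lambda>n. max (p n) (q n)) \<longlongrightarrow> r\<^sup>2 / 2) at_top"
        using tendsto_max[OF pl ql] eq by simp
    qed
  qed
  have "((\<lambda>n. (A n + B n) / (A n / p n + 1 * (B n / q n)) * (1 / P n)) \<longlongrightarrow> r\<^sup>2 / 2 * (1 / (1 - 0))) at_top"
    by (intro tendsto_mult M Pl)
  then have L: "((\<lambda>n. (A n + B n) / (A n / p n + 1 * (B n / q n)) * (1 / P n)) \<longlongrightarrow> r\<^sup>2 / 2) at_top" by simp
  show ?thesis
    by (rule filterlim_cong[THEN iffD1, OF refl refl _ L]) (use ev in \<open>eventually_elim, simp\<close>)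
qed

lemma C2fin:
  assumes "l < r" "r < 0"
  shows "(EE c (ereal l) (ereal r) \<longlongrightarrow> - (r\<^sup>2 / 2)) at_top"
proof -
  define A where "A n = Fd c (ereal r) n" for n
  define B where "B n = - Fd c (ereal l) n" for n
  define p where "p n = A n / Phi (r * sqrt n - c)" for n
  define q where "q n = B n / Phi (l * sqrt n - c)" for n
  define P where "P n = Phi (r * sqrt n - c) - Phi (l * sqrt n - c)" for n
  have l0: "l < 0" using assms by simp
  have pl: "(p \<longlongrightarrow> - (r\<^sup>2 / 2)) at_top" unfolding p_def A_def using ratio_out[OF assms(2)] .
  have ql: "(q \<longlongrightarrow> l\<^sup>2 / 2) at_top" unfolding q_def B_def
    using tendsto_minus[OF ratio_out[OF l0, of c]] by simp
  have Pl: "((\<lambda>n. 1 / (1 - P n)) \<longlongrightarrow> 1 / (1 - (0 - 0))) at_top" unfolding P_def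
    by (intro tendsto_intros Phi_lim_neg assms l0) simp
  have ev: "\<forall>\<^sub>F n in at_top. EE c (ereal l) (ereal r) n = (A n + B n) / (A n / p n + (-1) * (B n / q n)) * (1 / (1 - P n))
      \<and> A n \<noteq> 0"
    using eventually_gt_at_top[of 0]
  proof eventually_elim
    case (elim n)
    have A: "A n < 0" unfolding A_def using Fd_neg assms elim by blast
    have B: "B n > 0" unfolding B_def using Fd_neg l0 elim by simp
    have ph1: "Phi (r * sqrt n - c) > 0" "Phi (l * sqrt n - c) > 0" by (rule Phi_pos)+
    have Ap: "A n / p n = Phi (r * sqrt n - c)" unfolding p_def using A ph1 by simp
    have Bq: "B n / q n = Phi (l * sqrt n - c)" unfolding q_def using B ph1 by simp
    have "EE c (ereal l) (ereal r) n = (A n + B n) / (A n / p n + (-1) * (B n / q n)) * (1 / (1 - P n))"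
      unfolding EE_def Ap Bq by (simp add: A_def B_def P_def)
    then show ?case using A by simp
  qed
  have M: "((\<lambda>n. (A n + B n) / (A n / p n + (-1) * (B n / q n))) \<longlongrightarrow> - (r\<^sup>2 / 2)) at_top"
  proof (rule gen_lim[OF _ pl _ ql])
    show "\<forall>\<^sub>F n in at_top. A n \<noteq> 0" using ev by eventually_elim simp
    show "- (r\<^sup>2 / 2) \<noteq> 0" "l\<^sup>2 / 2 \<noteq> 0" using assms by auto
    have "(- r)\<^sup>2 < (- l)\<^sup>2" by (rule power_strict_mono) (use assms in auto)
    then have "r\<^sup>2 < l\<^sup>2" by simp
    then show "((\<lambda>n. B n / A n) \<longlongrightarrow> 0) at_top" unfolding A_def B_def using BA_lim assms by simp
  qed
  have "((\<lambda>n. (A n + B n) / (A n / p n + (-1) * (B n / q n)) * (1 / (1 - P n))) \<longlongrightarrow> - (r\<^sup>2 / 2) * (1 / (1 - (0 - 0)))) at_top"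
    by (intro tendsto_mult M Pl)
  then have L: "((\<lambda>n. (A n + B n) / (A n / p n + (-1) * (B n / q n)) * (1 / (1 - P n))) \<longlongrightarrow> - (r\<^sup>2 / 2)) at_top" by simp
  show ?thesis
    by (rule filterlim_cong[THEN iffD1, OF refl refl _ L]) (use ev in \<open>eventually_elim, simp\<close>)
qed

lemma C1inf:
  assumes "0 < r"
  shows "(EE c (-\<infinity>) (ereal r) \<longlongrightarrow> r\<^sup>2 / 2) at_top"
proof -
  have "((\<lambda>n. Fd c (ereal r) n / Phi (- (r * sqrt n - c)) * (1 / Phi (r * sqrt n - c))) \<longlongrightarrow> r\<^sup>2 / 2 * (1 / 1)) at_top"
    by (intro tendsto_intros ratio_in Phi_lim_pos assms) simp
  then have L: "((\<lambda>n. Fd c (ereal r) n / Phi (- (r * sqrt n - c)) * (1 / Phi (r * sqrt n - c))) \<longlongrightarrow> r\<^sup>2 / 2) at_top" by simp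
  show ?thesis
  proof (rule filterlim_cong[THEN iffD1, OF refl refl _ L], intro always_eventually allI)
    fix n
    show "Fd c (ereal r) n / Phi (- (r * sqrt n - c)) * (1 / Phi (r * sqrt n - c)) = EE c (-\<infinity>) (ereal r) n"
      using Phi_sym[of "r * sqrt n - c"] by (simp add: EE_def)
  qed
qed

lemma C2inf:
  assumes "r < 0"
  shows "(EE c (-\<infinity>) (ereal r) \<longlongrightarrow> - (r\<^sup>2 / 2)) at_top"
proof -
  have "((\<lambda>n. Fd c (ereal r) n / Phi (r * sqrt n - c) * (1 / (1 - Phi (r * sqrt n - c)))) \<longlongrightarrow> - (r\<^sup>2 / 2) * (1 / (1 - 0))) at_top"
    by (intro tendsto_intros ratio_out Phi_lim_neg assms) simp
  then have L: "((\<lambda>n. Fd c (ereal r) n / Phi (r * sqrt n - c) * (1 / (1 - Phi (r * sqrt n - c)))) \<longlongrightarrow> - (r\<^sup>2 / 2)) at_top" by simp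
  show ?thesis
    by (rule filterlim_cong[THEN iffD1, OF refl refl _ L]) (auto simp: EE_def)
qed

lemma C3:
  assumes "aL < 0"
  shows "(EE c aL (ereal 0) \<longlongrightarrow> 0) at_top"
proof (cases aL)
  case (real l)
  then have l: "l < 0" using assms by simp
  have Fd0: "((\<lambda>n. Fd c (ereal l) n) \<longlongrightarrow> 0) at_top" unfolding Fd_real using l by real_asymp
  have D: "Phi (- c) * (1 - Phi (- c)) \<noteq> 0" using Phi_pos[of "-c"] Phi_less1[of "-c"] by simp
  have "((\<lambda>n. (0 - Fd c (ereal l) n) / ((Phi (- c) - Phi (l * sqrt n - c)) * (1 - (Phi (- c) - Phi (l * sqrt n - c)))))
     \<longlongrightarrow> (0 - 0) / ((Phi (- c) - 0) * (1 - (Phi (- c) - 0)))) at_top"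
    by (intro tendsto_intros Fd0 Phi_lim_neg l) (use D in simp)
  moreover have "EE c (ereal l) (ereal 0) = (\<lambda>n. (0 - Fd c (ereal l) n) / ((Phi (- c) - Phi (l * sqrt n - c)) * (1 - (Phi (- c) - Phi (l * sqrt n - c)))))"
    by (auto simp: EE_def Fd_real fun_eq_iff)
  ultimately show ?thesis using real by simp
next
  case PInf then show ?thesis using assms by simp
next
  case MInf
  have "Fd c (ereal 0) n = 0" for n by (simp only: Fd_real)
  then have "EE c aL (ereal 0) = (\<lambda>n. 0)" using MInf by (simp add: EE_def fun_eq_iff)
  then show ?thesis by simp
qed

lemma Fe_refl: "Fe (- c) (- a) n = 1 - Fe c a n"
proof (cases a)
  case (real r)
  have "Phi (- r * sqrt n - - c) = Phi (- (r * sqrt n - c))" by (simp add: algebra_simps)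
  then show ?thesis using real Phi_sym[of "r * sqrt n - c"] by simp
qed auto

lemma Fd_refl: "Fd (- c) (- a) n = - Fd c a n"
proof (cases a)
  case (real r)
  have "(- r * sqrt n - - c)\<^sup>2 = (r * sqrt n - c)\<^sup>2" by (simp add: power2_eq_square algebra_simps)
  then show ?thesis using real by (simp add: Fd_real)
qed auto

lemma EE_refl: "EE c aL aU n = EE (- c) (- aU) (- aL) n"
  unfolding EE_def Fe_refl Fd_refl by (simp add: algebra_simps)

definition esq :: "ereal \<Rightarrow> ereal" where
  "esq a = (case a of ereal r \<Rightarrow> ereal (r\<^sup>2) | _ \<Rightarrow> \<infinity>)"

definition Tgt :: "ereal \<Rightarrow> ereal \<Rightarrow> real" where
  "Tgt aL aU = (if aL < 0 \<and> 0 < aU then 1/2 else -1/2) * real_of_ereal (min (esq aL) (esq aU))"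

lemma esq_uminus: "esq (- a) = esq a"
  by (cases a) (auto simp: esq_def)

lemma Tgt_refl: "Tgt aL aU = Tgt (- aU) (- aL)"
  unfolding Tgt_def esq_uminus by (auto simp: min.commute ereal_uminus_less_reorder ereal_less_uminus_reorder)

lemma core_half:
  assumes "aL < aU"
    and "aU = ereal 0 \<or> aU < 0 \<or> (aL = -\<infinity> \<and> 0 < aU \<and> aU \<noteq> \<infinity>)
         \<or> (\<exists>l r. aL = ereal l \<and> aU = ereal r \<and> l < 0 \<and> 0 < r \<and> r\<^sup>2 \<le> l\<^sup>2)"
  shows "(EE c aL aU \<longlongrightarrow> Tgt aL aU) at_top"
  using assms(2)
proof (elim disjE exE conjE)
  assume U: "aU = ereal 0"
  then have "aL < 0" using assms(1) by (simp add: zero_ereal_def)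
  moreover have "Tgt aL aU = 0" using U \<open>aL < 0\<close>
    by (cases aL) (auto simp: Tgt_def esq_def zero_ereal_def)
  ultimately show ?thesis using C3 U by simp
next
  assume U: "aU < 0"
  then obtain r where r: "aU = ereal r" "r < 0" using assms(1) by (cases aU) auto
  show ?thesis
  proof (cases aL)
    case (real l)
    then have "l < r" using assms(1) r by simp
    moreover have "r\<^sup>2 < l\<^sup>2" using \<open>l < r\<close> r
      by (metis abs_of_neg less_trans neg_less_iff_less power2_abs power_strict_mono abs_ge_zero pos2)
    ultimately have "Tgt aL aU = - (r\<^sup>2 / 2)" using r real by (auto simp: Tgt_def esq_def min_def)
    then show ?thesis using C2fin[OF \<open>l < r\<close> r(2)] r real by simp
  next
    case MInf
    then have "Tgt aL aU = - (r\<^sup>2 / 2)" using r by (auto simp: Tgt_def esq_def min_def)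
    then show ?thesis using C2inf[OF r(2)] r MInf by simp
  qed (use assms(1) in auto)
next
  assume L: "aL = -\<infinity>" and "0 < aU" "aU \<noteq> \<infinity>"
  then obtain r where r: "aU = ereal r" "0 < r" by (cases aU) auto
  then have T: "Tgt aL aU = r\<^sup>2 / 2" using L by (auto simp: Tgt_def esq_def min_def)
  show ?thesis unfolding T using C1inf[OF r(2), of c] r L by simp
next
  fix l r assume "aL = ereal l" "aU = ereal r" "l < 0" "0 < r" "r\<^sup>2 \<le> l\<^sup>2"
  moreover from this have T: "Tgt aL aU = r\<^sup>2 / 2" by (auto simp: Tgt_def esq_def min_def)
  ultimately show ?thesis unfolding T using C1fin[of l r c] by simp
qed

lemma core:
  assumes "aL < aU" "\<not> (aL = -\<infinity> \<and> aU = \<infinity>)"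
  shows "(EE c aL aU \<longlongrightarrow> Tgt aL aU) at_top"
proof -
  define H where "H aL aU \<longleftrightarrow> aU = ereal 0 \<or> aU < 0 \<or> (aL = -\<infinity> \<and> 0 < aU \<and> aU \<noteq> \<infinity>)
         \<or> (\<exists>l r. aL = ereal l \<and> aU = ereal r \<and> l < 0 \<and> 0 < r \<and> r\<^sup>2 \<le> l\<^sup>2)" for aL aU :: ereal
  have "H aL aU \<or> H (- aU) (- aL)"
  proof (cases aU)
    case PInf
    then obtain l where l: "aL = ereal l" using assms by (cases aL) auto
    then have "H (- aU) (- aL)" using PInf unfolding H_def
      by (cases "l < 0"; cases "l = 0") (auto simp: zero_ereal_def)
    then show ?thesis ..
  next
    case MInf then show ?thesis using assms by simp
  next
    case (real r)
    note rU = real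
    show ?thesis
    proof (cases aL)
      case MInf
      then show ?thesis using rU unfolding H_def
        by (cases "r < 0"; cases "r = 0") (auto simp: zero_ereal_def)
    next
      case PInf then show ?thesis using assms by simp
    next
      case (real l)
      note lL = real
      then have lr: "l < r" using assms rU by simp
      consider "r < 0" | "r = 0" | "0 < r \<and> l < 0 \<and> r\<^sup>2 \<le> l\<^sup>2" | "0 < r \<and> l < 0 \<and> l\<^sup>2 < r\<^sup>2"
        | "0 < r \<and> l = 0" | "0 < r \<and> 0 < l" by linarith
      then show ?thesis
      proof cases
        case 4
        then have "H (- aU) (- aL)" unfolding H_def using rU lL
          by (auto intro!: exI[of _ "- r"] exI[of _ "- l"])
        then show ?thesis ..
      qed (use rU lL in \<open>auto simp: H_def zero_ereal_def\<close>)
    qed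
  qed
  then show ?thesis
  proof
    assume "H aL aU" then show ?thesis using core_half[OF assms(1)] unfolding H_def by blast
  next
    assume "H (- aU) (- aL)"
    moreover have "- aU < - aL" using assms(1) by simp
    ultimately have "(EE (- c) (- aU) (- aL) \<longlongrightarrow> Tgt (- aU) (- aL)) at_top"
      using core_half unfolding H_def by blast
    moreover have "EE c aL aU = EE (- c) (- aU) (- aL)" using EE_refl[of c aL aU] by (simp add: fun_eq_iff)
    ultimately show ?thesis using Tgt_refl[of aL aU] by simp
  qed
qed

lemma Fe_deriv:
  assumes "n > 0"
  shows "DERIV (\<lambda>n. Fe c a n) n :> Fd c a n"
proof (cases a)
  case (real r)
  have d: "DERIV (\<lambda>n. r * sqrt n - c) n :> r * (inverse (sqrt n) / 2)"
    using assms by (auto intro!: derivative_eq_intros DERIV_real_sqrt)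
  have "DERIV (\<lambda>n. Phi (r * sqrt n - c)) n :> exp (- (r * sqrt n - c)\<^sup>2 / 2) / sqrt (2 * pi) * (r * (inverse (sqrt n) / 2))"
    by (rule DERIV_chain2[OF Phi_deriv' d])
  then show ?thesis using real by (simp add: Fd_real)
qed auto

lemma P_range:
  assumes "aL < aU" "\<not> (aL = -\<infinity> \<and> aU = \<infinity>)" "n > 0"
  shows "0 < Fe c aU n - Fe c aL n" "Fe c aU n - Fe c aL n < 1"
proof -
  have "0 < Fe c aU n - Fe c aL n \<and> Fe c aU n - Fe c aL n < 1"
  proof (cases aU)
    case (real r)
    note rU = real
    show ?thesis
    proof (cases aL)
      case (real l)
      note real' = real
      have "l * sqrt n < r * sqrt n" using assms rU real' by simp
      then have "Phi (l * sqrt n - c) < Phi (r * sqrt n - c)" by (intro Phi_mono_strict) simp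
      then show ?thesis using rU real' Phi_pos[of "l * sqrt n - c"] Phi_less1[of "r * sqrt n - c"] by simp
    qed (use rU assms Phi_pos Phi_less1 in auto)
  next
    case PInf
    then obtain l where "aL = ereal l" using assms by (cases aL) auto
    then show ?thesis using PInf Phi_pos Phi_less1 by auto
  qed (use assms in auto)
  then show "0 < Fe c aU n - Fe c aL n" "Fe c aU n - Fe c aL n < 1" by auto
qed

lemma logit_deriv:
  assumes "aL < aU" "\<not> (aL = -\<infinity> \<and> aU = \<infinity>)" "n > 0"
  shows "DERIV (\<lambda>n. logit (Fe c aU n - Fe c aL n)) n :> EE c aL aU n"
proof -
  have dP: "DERIV (\<lambda>n. Fe c aU n - Fe c aL n) n :> Fd c aU n - Fd c aL n"
    using Fe_deriv[OF assms(3), of c aU] Fe_deriv[OF assms(3), of c aL] by (rule DERIV_diff)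
  have p: "0 < Fe c aU n - Fe c aL n" "Fe c aU n - Fe c aL n < 1" using P_range[OF assms] by auto
  have d1: "DERIV (\<lambda>n. ln (Fe c aU n - Fe c aL n)) n :> inverse (Fe c aU n - Fe c aL n) * (Fd c aU n - Fd c aL n)"
    by (rule DERIV_chain2[OF DERIV_ln dP]) (use p in simp)
  have d2': "DERIV (\<lambda>n. 1 - (Fe c aU n - Fe c aL n)) n :> - (Fd c aU n - Fd c aL n)"
    using DERIV_diff[OF DERIV_const[of 1] dP] by simp
  have d2: "DERIV (\<lambda>n. ln (1 - (Fe c aU n - Fe c aL n))) n :> inverse (1 - (Fe c aU n - Fe c aL n)) * (- (Fd c aU n - Fd c aL n))"
    by (rule DERIV_chain2[OF DERIV_ln d2']) (use p in simp)
  have "DERIV (\<lambda>n. ln (Fe c aU n - Fe c aL n) - ln (1 - (Fe c aU n - Fe c aL n))) n :>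
     inverse (Fe c aU n - Fe c aL n) * (Fd c aU n - Fd c aL n) - inverse (1 - (Fe c aU n - Fe c aL n)) * (- (Fd c aU n - Fd c aL n))"
    by (rule DERIV_diff[OF d1 d2])
  moreover have "inverse (Fe c aU n - Fe c aL n) * (Fd c aU n - Fd c aL n) - inverse (1 - (Fe c aU n - Fe c aL n)) * (- (Fd c aU n - Fd c aL n)) = EE c aL aU n"
    using p unfolding EE_def by (simp add: field_simps)
  ultimately show ?thesis unfolding logit_def by simp
qed

theorem theorem1:
  fixes deltaL deltaU :: ereal and theta I u :: real
  assumes "deltaL < deltaU"
    and "\<bar>deltaL\<bar> \<noteq> \<infinity> \<or> \<bar>deltaU\<bar> \<noteq> \<infinity>"
    and "0 < I"
    and "0 < u" and "u < 1"
  defines "f \<equiv> (\<lambda>n. logit (p_post I theta u deltaU n - p_post I theta u deltaL n))"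
  shows "(\<forall>\<^sub>F n in at_top. f differentiable (at n))
    \<and> ((\<lambda>n. ereal (deriv f n)) \<longlongrightarrow>
         ereal (0.5 - of_bool (ereal theta \<notin> {deltaL<..<deltaU}))
           * min (a_sq I theta deltaU) (a_sq I theta deltaL)) at_top"
proof -
  define c where "c = Phi_inv u"
  define ae where "ae \<delta> = (case \<delta> of ereal d \<Rightarrow> ereal (a_std I theta d) | PInfty \<Rightarrow> \<infinity> | MInfty \<Rightarrow> -\<infinity>)" for \<delta>
  have pp: "p_post I theta u \<delta> n = Fe c (ae \<delta>) n" for \<delta> n
    by (cases \<delta>) (simp_all add: p_post_def ae_def c_def)
  have f: "f = (\<lambda>n. logit (Fe c (ae deltaU) n - Fe c (ae deltaL) n))"
    by (simp add: f_def fun_eq_iff pp)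
  have s: "sqrt (inverse I) > 0" using assms(3) by simp
  have as_less: "a_std I theta x < a_std I theta y \<longleftrightarrow> x < y" for x y
    using s unfolding a_std_def by (simp add: divide_less_cancel)
  have as_neg: "a_std I theta x < 0 \<longleftrightarrow> x < theta" for x
    using s unfolding a_std_def by (simp add: divide_less_0_iff)
  have as_pos: "0 < a_std I theta x \<longleftrightarrow> theta < x" for x
    using s unfolding a_std_def by (simp add: zero_less_divide_iff)
  have lt: "ae deltaL < ae deltaU" using assms(1)
    by (cases deltaL; cases deltaU) (auto simp: ae_def as_less)
  have nb: "\<not> (ae deltaL = -\<infinity> \<and> ae deltaU = \<infinity>)" using assms(2)
    by (cases deltaL; cases deltaU) (auto simp: ae_def)
  have D: "\<forall>n. n > 0 \<longrightarrow> DERIV f n :> EE c (ae deltaL) (ae deltaU) n"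
    unfolding f using logit_deriv[OF lt nb] by blast
  have part1: "\<forall>\<^sub>F n in at_top. f differentiable (at n)"
    using eventually_gt_at_top[of 0] by eventually_elim (use D in \<open>auto simp: real_differentiable_def\<close>)
  have "(EE c (ae deltaL) (ae deltaU) \<longlongrightarrow> Tgt (ae deltaL) (ae deltaU)) at_top"
    by (rule core[OF lt nb])
  moreover have ev: "\<forall>\<^sub>F n in at_top. EE c (ae deltaL) (ae deltaU) n = deriv f n"
    using eventually_gt_at_top[of "0::real"] by eventually_elim (metis D DERIV_imp_deriv)
  ultimately have "(deriv f \<longlongrightarrow> Tgt (ae deltaL) (ae deltaU)) at_top"
    by (rule filterlim_cong[THEN iffD1, OF refl refl, rotated])
  then have L: "((\<lambda>n. ereal (deriv f n)) \<longlongrightarrow> ereal (Tgt (ae deltaL) (ae deltaU))) at_top"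
    by (rule tendsto_ereal)
  have mem: "ereal theta \<in> {deltaL<..<deltaU} \<longleftrightarrow> ae deltaL < 0 \<and> 0 < ae deltaU"
    by (cases deltaL; cases deltaU) (auto simp: ae_def as_neg as_pos zero_ereal_def)
  have asq: "a_sq I theta \<delta> = esq (ae \<delta>)" for \<delta>
    by (cases \<delta>) (auto simp: a_sq_def esq_def ae_def)
  have fin: "\<bar>min (esq (ae deltaL)) (esq (ae deltaU))\<bar> \<noteq> \<infinity>" using assms(2)
    by (cases deltaL; cases deltaU) (auto simp: esq_def ae_def min_def)
  obtain m where m: "min (esq (ae deltaL)) (esq (ae deltaU)) = ereal m"
    using fin by (metis ereal_real')
  have "ereal (0.5 - of_bool (ereal theta \<notin> {deltaL<..<deltaU})) * min (a_sq I theta deltaU) (a_sq I theta deltaL)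
      = ereal (Tgt (ae deltaL) (ae deltaU))"
    unfolding asq min.commute[of "esq (ae deltaU)"] m Tgt_def mem by auto
  then show ?thesis using part1 L by simp
qed

end
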